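(* Let $\mathscr{A}$ be a nonempty closed set of games with $\mathscr{A}\neq\{0\}$ whose misère quotient $(\mathcal{Q},\mathcal{P})=\mathcal{Q}(\mathscr{A})$ is finite, and let $\mathcal{K}$ be the kernel of $\mathcal{Q}$. Then $\mathcal{K}\cap\mathcal{P}\neq\emptyset$.
   Context: Games are finite, loopfree impartial games identified with the finite set of their options ($0=\{\}$); disjunctive sum $G+H=\{G'+H\}\cup\{G+H'\}$. Misère outcome: $o^-(G)=\mathscr{P}$ iff $G\neq0$ and every option has outcome $\mathscr{N}$; otherwise $\mathscr{N}$. A set of games is closed if it contains all options of its members and is closed under $+$. For closed $\mathscr{A}$: $G\equiv_\mathscr{A}H$ iff $o^-(G+X)=o^-(H+X)$ for all $X\in\mathscr{A}$; $\mathcal{Q}(\mathscr{A})=(\mathcal{Q},\mathcal{P})$ is the commutative monoid of $\equiv_\mathscr{A}$-classes ($[G][H]=[G+H]$) with $\mathcal{P}$ the set of classes of misère $\mathscr{P}$-positions. For a finite commutative monoid $\mathcal{Q}$, let $z$ be the product of all idempotents ($x^2=x$) of $\mathcal{Q}$; the kernel is $\mathcal{K}=\{x\in\mathcal{Q}: x\mid z\text{ and } z\mid x\}$, where $x\mid y$ means $xw=y$ for some $w\in\mathcal{Q}$. *)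

theory Defs
  imports "HOL-Library.FSet" "HOL-Algebra.Divisibility" "HOL-Algebra.FiniteProduct"
begin

text \<open>Finite loopfree impartial games, identified with the finite set of their options
  (nested datatype over finite sets, so equality is extensional).\<close>
datatype game = Game (opts: "game fset")

abbreviation zero_game :: game where "zero_game \<equiv> Game {||}"

lemma size_opt_less: "x |\<in>| A \<Longrightarrow> size x < size (Game A)"
proof -
  assume h: "x |\<in>| A"
  have "Suc (size x) \<le> (\<Sum>y\<in>fset A. Suc (size y))"
    using h by (intro member_le_sum[where f="\<lambda>y. Suc (size y)"]) auto
  then show ?thesis by (simp add: size_fset_simps)
qed

function gplus :: "game \<Rightarrow> game \<Rightarrow> game" where
  "gplus (Game A) (Game B) =
     Game ((\<lambda>a. gplus a (Game B)) |`| A |\<union>| (\<lambda>b. gplus (Game A) b) |`| B)"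
  by (metis game.exhaust prod.exhaust) auto
termination
  by (relation "measure (\<lambda>(g, h). size g + size h)") (auto dest: size_opt_less)

text \<open>Misere outcome: \<open>isP G\<close> iff \<open>o\<^sup>-(G) = P\<close> (otherwise the outcome is N).\<close>
function isP :: "game \<Rightarrow> bool" where
  "isP (Game A) = (A \<noteq> {||} \<and> (\<forall>a. a |\<in>| A \<longrightarrow> \<not> isP a))"
  by (metis game.exhaust) auto
termination
  by (relation "measure size") (auto dest: size_opt_less)

definition closed_set :: "game set \<Rightarrow> bool" where
  "closed_set \<A> \<longleftrightarrow>
     (\<forall>G\<in>\<A>. \<forall>G'. G' |\<in>| opts G \<longrightarrow> G' \<in> \<A>) \<and>
     (\<forall>G\<in>\<A>. \<forall>H\<in>\<A>. gplus G H \<in> \<A>)"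

definition misere_eqrel :: "game set \<Rightarrow> (game \<times> game) set" where
  "misere_eqrel \<A> =
     {(G, H). G \<in> \<A> \<and> H \<in> \<A> \<and> (\<forall>X\<in>\<A>. isP (gplus G X) = isP (gplus H X))}"

definition misere_quotient :: "game set \<Rightarrow> game set monoid" where
  "misere_quotient \<A> =
     \<lparr> carrier = \<A> // misere_eqrel \<A>,
       mult = (\<lambda>X Y. misere_eqrel \<A> `` {gplus (SOME G. G \<in> X) (SOME H. H \<in> Y)}),
       one = misere_eqrel \<A> `` {zero_game} \<rparr>"

definition P_classes :: "game set \<Rightarrow> game set set" where
  "P_classes \<A> = {misere_eqrel \<A> `` {G} | G. G \<in> \<A> \<and> isP G}"

definition idempotents :: "('a, 'b) monoid_scheme \<Rightarrow> 'a set" where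
  "idempotents M = {x \<in> carrier M. x \<otimes>\<^bsub>M\<^esub> x = x}"

definition monoid_kernel :: "('a, 'b) monoid_scheme \<Rightarrow> 'a set" where
  "monoid_kernel M =
     (let z = finprod M id (idempotents M)
      in {x \<in> carrier M. x divides\<^bsub>M\<^esub> z \<and> z divides\<^bsub>M\<^esub> x})"

end

theory Submission
  imports Defs
begin

lemma opts_gplus: "opts (gplus G H) = (\<lambda>a. gplus a H) |`| opts G |\<union>| (\<lambda>b. gplus G b) |`| opts H"
  by (cases G; cases H) simp

lemma isP_opts: "isP G = (opts G \<noteq> {||} \<and> (\<forall>a. a |\<in>| opts G \<longrightarrow> \<not> isP a))"
  by (cases G) simp

lemma game_eqI: "opts G = opts H \<Longrightarrow> G = H"
  by (cases G; cases H) simp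

lemma gplus_comm: "gplus G H = gplus H G"
proof (induction G H rule: gplus.induct)
  case (1 A B)
  have e1: "(\<lambda>a. gplus a (Game B)) |`| A = (\<lambda>a. gplus (Game B) a) |`| A"
    by (rule fimage_cong) (auto intro: 1(1))
  have e2: "(\<lambda>b. gplus (Game A) b) |`| B = (\<lambda>b. gplus b (Game A)) |`| B"
    by (rule fimage_cong) (auto intro: 1(2))
  show ?case
    by (simp only: gplus.simps e1 e2 funion_commute)
qed

lemma gplus_zero: "gplus G zero_game = G"
proof (induction G)
  case (Game A)
  then show ?case
    by (intro game_eqI) (auto simp: opts_gplus fimage_ident)
qed

lemma gplus_assoc: "gplus (gplus G H) K = gplus G (gplus H K)"
proof (induction "size G + size H + size K" arbitrary: G H K rule: less_induct)
  case less
  have sl: "\<And>x X. x |\<in>| opts X \<Longrightarrow> size x < size X"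
    by (metis game.collapse size_opt_less)
  have e1: "(\<lambda>a. gplus (gplus a H) K) |`| opts G = (\<lambda>a. gplus a (gplus H K)) |`| opts G"
    by (rule fimage_cong) (auto intro!: less dest: sl)
  have e2: "(\<lambda>b. gplus (gplus G b) K) |`| opts H = (\<lambda>b. gplus G (gplus b K)) |`| opts H"
    by (rule fimage_cong) (auto intro!: less dest: sl)
  have e3: "(\<lambda>c. gplus (gplus G H) c) |`| opts K = (\<lambda>c. gplus G (gplus H c)) |`| opts K"
    by (rule fimage_cong) (auto intro!: less dest: sl)
  show ?case
    apply (rule game_eqI)
    apply (simp only: opts_gplus fimage_funion fset.map_comp o_def e1 e2 e3)
    by (simp add: funion_assoc)
qed


lemma closedD1: "closed_set A \<Longrightarrow> G \<in> A \<Longrightarrow> x |\<in>| opts G \<Longrightarrow> x \<in> A"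
  unfolding closed_set_def by blast

lemma closedD2: "closed_set A \<Longrightarrow> G \<in> A \<Longrightarrow> H \<in> A \<Longrightarrow> gplus G H \<in> A"
  unfolding closed_set_def by blast

lemma zero_in: assumes "closed_set A" shows "G \<in> A \<Longrightarrow> zero_game \<in> A"
proof (induction G)
  case (Game S)
  show ?case
  proof (cases "S = {||}")
    case True then show ?thesis using Game by simp
  next
    case False
    then obtain a where "a |\<in>| S" by blast
    then show ?thesis using Game closedD1[OF assms, of "Game S" a] by auto
  qed
qed

lemma star_in: assumes "closed_set A" shows "G \<in> A \<Longrightarrow> G \<noteq> zero_game \<Longrightarrow> Game {|zero_game|} \<in> A"
proof (induction G)
  case (Game S)
  show ?case
  proof (cases "\<exists>a. a |\<in>| S \<and> a \<noteq> zero_game")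
    case True
    then obtain a where a: "a |\<in>| S" "a \<noteq> zero_game" by blast
    then show ?thesis using Game closedD1[OF assms, of "Game S" a] by auto
  next
    case False
    then have "S = {|zero_game|}" using Game.prems by auto
    then show ?thesis using Game by simp
  qed
qed

lemma equiv_R: "equiv A (misere_eqrel A)"
  unfolding equiv_def refl_on_def sym_def trans_def misere_eqrel_def by auto

lemma R_isP: "(G, H) \<in> misere_eqrel A \<Longrightarrow> zero_game \<in> A \<Longrightarrow> isP G = isP H"
  unfolding misere_eqrel_def using gplus_zero by (metis (mono_tags, lifting) case_prodD mem_Collect_eq)

lemma R_cong_left:
  assumes c: "closed_set A" and r: "(G, G') \<in> misere_eqrel A" and h: "H \<in> A"
  shows "(gplus G H, gplus G' H) \<in> misere_eqrel A"
proof -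
  have g: "G \<in> A" "G' \<in> A" and x: "\<And>X. X \<in> A \<Longrightarrow> isP (gplus G X) = isP (gplus G' X)"
    using r unfolding misere_eqrel_def by auto
  show ?thesis unfolding misere_eqrel_def
    using g h closedD2[OF c] x by (auto simp: gplus_assoc)
qed

lemma R_cong:
  assumes c: "closed_set A" and r: "(G, G') \<in> misere_eqrel A" and r2: "(H, H') \<in> misere_eqrel A"
  shows "(gplus G H, gplus G' H') \<in> misere_eqrel A"
proof -
  have "H \<in> A" "G' \<in> A" using r r2 unfolding misere_eqrel_def by auto
  then have "(gplus G H, gplus G' H) \<in> misere_eqrel A" "(gplus H G', gplus H' G') \<in> misere_eqrel A"
    using R_cong_left[OF c] r r2 by auto
  then show ?thesis using equiv_R[of A] unfolding equiv_def trans_def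
    by (metis gplus_comm)
qed

lemma mult_cls:
  assumes c: "closed_set A" and "G \<in> A" "H \<in> A"
  shows "(misere_eqrel A `` {G}) \<otimes>\<^bsub>misere_quotient A\<^esub> (misere_eqrel A `` {H}) = misere_eqrel A `` {gplus G H}"
proof -
  let ?R = "misere_eqrel A"
  have "G \<in> ?R `` {G}" "H \<in> ?R `` {H}" using assms equiv_R[of A]
    by (auto simp: equiv_def refl_on_def)
  then have "(SOME x. x \<in> ?R `` {G}) \<in> ?R `` {G}" "(SOME x. x \<in> ?R `` {H}) \<in> ?R `` {H}"
    by (metis someI)+
  then have "(G, SOME x. x \<in> ?R `` {G}) \<in> ?R" "(H, SOME x. x \<in> ?R `` {H}) \<in> ?R" by auto
  then have "(gplus G H, gplus (SOME x. x \<in> ?R `` {G}) (SOME x. x \<in> ?R `` {H})) \<in> ?R"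
    using R_cong[OF c] by blast
  then show ?thesis using equiv_class_eq[OF equiv_R]
    unfolding misere_quotient_def by simp
qed


lemma carrier_Q: "carrier (misere_quotient A) = A // misere_eqrel A"
  unfolding misere_quotient_def by simp

lemma one_Q: "\<one>\<^bsub>misere_quotient A\<^esub> = misere_eqrel A `` {zero_game}"
  unfolding misere_quotient_def by simp

lemma comm_monoid_Q:
  assumes c: "closed_set A" and ne: "A \<noteq> {}"
  shows "comm_monoid (misere_quotient A)"
proof -
  let ?R = "misere_eqrel A" and ?M = "misere_quotient A"
  have z: "zero_game \<in> A" using ne zero_in[OF c] by blast
  have cl: "\<And>G. G \<in> A \<Longrightarrow> ?R `` {G} \<in> carrier ?M" by (simp add: carrier_Q quotientI)
  have el: "\<And>x P. x \<in> carrier ?M \<Longrightarrow> (\<And>G. G \<in> A \<Longrightarrow> x = ?R `` {G} \<Longrightarrow> P) \<Longrightarrow> P"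
    by (metis carrier_Q quotientE)
  show ?thesis
  proof (rule comm_monoidI)
    fix x y assume "x \<in> carrier ?M" "y \<in> carrier ?M"
    then show "x \<otimes>\<^bsub>?M\<^esub> y \<in> carrier ?M"
      by (elim el) (simp add: mult_cls[OF c] cl closedD2[OF c])
  next
    show "\<one>\<^bsub>?M\<^esub> \<in> carrier ?M" using cl z by (simp add: one_Q)
  next
    fix x y w assume "x \<in> carrier ?M" "y \<in> carrier ?M" "w \<in> carrier ?M"
    then show "x \<otimes>\<^bsub>?M\<^esub> y \<otimes>\<^bsub>?M\<^esub> w = x \<otimes>\<^bsub>?M\<^esub> (y \<otimes>\<^bsub>?M\<^esub> w)"
      by (elim el) (simp add: mult_cls[OF c] closedD2[OF c] gplus_assoc)
  next
    fix x assume "x \<in> carrier ?M"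
    then show "\<one>\<^bsub>?M\<^esub> \<otimes>\<^bsub>?M\<^esub> x = x"
      by (elim el) (simp add: one_Q mult_cls[OF c] z gplus_zero gplus_comm)
  next
    fix x y assume "x \<in> carrier ?M" "y \<in> carrier ?M"
    then show "x \<otimes>\<^bsub>?M\<^esub> y = y \<otimes>\<^bsub>?M\<^esub> x"
      by (elim el) (simp add: mult_cls[OF c] gplus_comm)
  qed
qed

lemma (in monoid) pow_period:
  fixes a p k t :: nat
  assumes y: "y \<in> carrier G" and e: "y [^] a = y [^] (a + p)" and k: "a \<le> k"
  shows "y [^] (k + t * p) = y [^] k"
proof (induction t)
  case 0 then show ?case by simp
next
  case (Suc t)
  have eq: "k + Suc t * p = (k - a) + (a + p) + t * p" using k by simp
  have "y [^] (k + Suc t * p) = y [^] (k - a) \<otimes> y [^] (a + p) \<otimes> y [^] (t * p)"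
    unfolding eq using y by (simp only: nat_pow_mult nat_pow_closed)
  also have "\<dots> = y [^] (k + t * p)"
    using k y e[symmetric] by (simp add: nat_pow_mult m_assoc)
  finally show ?case using Suc by (simp add: add.assoc)
qed

lemma (in monoid) finite_idem_pow:
  assumes fin: "finite (carrier G)" and y: "y \<in> carrier G"
  shows "\<exists>m::nat\<ge>1. y [^] m \<otimes> y [^] m = y [^] m"
proof -
  have "\<not> inj (\<lambda>k::nat. y [^] (k + 1))"
  proof
    assume "inj (\<lambda>k::nat. y [^] (k + 1))"
    moreover have "range (\<lambda>k::nat. y [^] (k + 1)) \<subseteq> carrier G" using y by auto
    ultimately show False using fin
      by (metis finite_imageD finite_subset infinite_UNIV_nat)
  qed
  then obtain i j :: nat where ij: "i \<noteq> j" "y [^] (i + 1) = y [^] (j + 1)"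
    unfolding inj_def by blast
  have "\<exists>a p::nat. a \<ge> 1 \<and> p \<ge> 1 \<and> y [^] a = y [^] (a + p)"
  proof (cases "i < j")
    case True
    then have "i + 1 + (j - i) = j + 1" by simp
    then show ?thesis using ij True by (intro exI[of _ "i+1"] exI[of _ "j - i"]) simp
  next
    case False
    then have "j < i" using ij by simp
    then have "j + 1 + (i - j) = i + 1" by simp
    then show ?thesis using ij \<open>j < i\<close> by (intro exI[of _ "j+1"] exI[of _ "i - j"]) simp
  qed
  then obtain a p :: nat where ap: "a \<ge> 1" "p \<ge> 1" "y [^] a = y [^] (a + p)" by blast
  let ?m = "a * p"
  have "a \<le> ?m" using ap by simp
  then have "y [^] (?m + a * p) = y [^] ?m" using pow_period[OF y ap(3)] by blast
  then show ?thesis using ap y by (intro exI[of _ ?m]) (simp add: nat_pow_mult)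
qed


theorem mainTheorem20:
  fixes \<A> :: "game set"
  assumes "\<A> \<noteq> {}"
    and "closed_set \<A>"
    and "\<A> \<noteq> {zero_game}"
    and "finite (carrier (misere_quotient \<A>))"
  shows "monoid_kernel (misere_quotient \<A>) \<inter> P_classes \<A> \<noteq> {}"
proof
  assume contra: "monoid_kernel (misere_quotient \<A>) \<inter> P_classes \<A> = {}"
  let ?M = "misere_quotient \<A>" and ?R = "misere_eqrel \<A>"
  define z where "z = finprod ?M id (idempotents ?M)"
  interpret comm_monoid ?M using comm_monoid_Q[OF assms(2,1)] .
  have c: "closed_set \<A>" by fact
  have zin: "zero_game \<in> \<A>" using assms(1) zero_in[OF c] by blast
  have Isub: "idempotents ?M \<subseteq> carrier ?M" unfolding idempotents_def by auto
  then have Ifin: "finite (idempotents ?M)" using assms(4) finite_subset by blast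
  have Ipi: "id \<in> idempotents ?M \<rightarrow> carrier ?M" using Isub by auto
  have zc: "z \<in> carrier ?M" unfolding z_def using Ipi by (rule finprod_closed)
  have zidem: "z \<otimes>\<^bsub>?M\<^esub> e = z" if e: "e \<in> idempotents ?M" for e
  proof -
    have ec: "e \<in> carrier ?M" and ee: "e \<otimes>\<^bsub>?M\<^esub> e = e" using e unfolding idempotents_def by auto
    have ins: "idempotents ?M = insert e (idempotents ?M - {e})" using e by blast
    have rc: "finprod ?M id (idempotents ?M - {e}) \<in> carrier ?M" using Ipi by (intro finprod_closed) auto
    have zz: "z = e \<otimes>\<^bsub>?M\<^esub> finprod ?M id (idempotents ?M - {e})"
      unfolding z_def by (subst ins, subst finprod_insert) (use Ifin Ipi ec in auto)
    show ?thesis unfolding zz using ec rc ee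
      by (metis m_assoc m_comm)
  qed
  have zK: "z \<otimes>\<^bsub>?M\<^esub> x \<in> monoid_kernel ?M" if x: "x \<in> carrier ?M" for x
  proof -
    obtain m :: nat where m: "m \<ge> 1" "x [^]\<^bsub>?M\<^esub> m \<otimes>\<^bsub>?M\<^esub> x [^]\<^bsub>?M\<^esub> m = x [^]\<^bsub>?M\<^esub> m"
      using finite_idem_pow[OF assms(4) x] by blast
    then have "x [^]\<^bsub>?M\<^esub> m \<in> idempotents ?M" using x unfolding idempotents_def by auto
    then have "z = z \<otimes>\<^bsub>?M\<^esub> x [^]\<^bsub>?M\<^esub> m" using zidem by simp
    also have "x [^]\<^bsub>?M\<^esub> m = x \<otimes>\<^bsub>?M\<^esub> x [^]\<^bsub>?M\<^esub> (m - 1)"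
      using m(1) x by (metis Suc_diff_1 less_le_trans nat_pow_Suc2 zero_less_one)
    finally have "z = (z \<otimes>\<^bsub>?M\<^esub> x) \<otimes>\<^bsub>?M\<^esub> x [^]\<^bsub>?M\<^esub> (m - 1)"
      using x zc by (simp add: m_assoc)
    then have d1: "(z \<otimes>\<^bsub>?M\<^esub> x) divides\<^bsub>?M\<^esub> z"
      unfolding factor_def using x by auto
    have d2: "z divides\<^bsub>?M\<^esub> (z \<otimes>\<^bsub>?M\<^esub> x)" unfolding factor_def using x by auto
    show ?thesis unfolding monoid_kernel_def Let_def z_def[symmetric] using d1 d2 x zc by auto
  qed
  obtain G0 where G0: "G0 \<in> \<A>" "z = ?R `` {G0}" using zc by (metis carrier_Q quotientE)
  have notP: "\<not> isP (gplus G0 H)" if H: "H \<in> \<A>" for H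
  proof
    assume p: "isP (gplus G0 H)"
    have hc: "?R `` {H} \<in> carrier ?M" using H by (simp add: carrier_Q quotientI)
    have "?R `` {gplus G0 H} = z \<otimes>\<^bsub>?M\<^esub> ?R `` {H}" using G0 H mult_cls[OF c] by simp
    then have "?R `` {gplus G0 H} \<in> monoid_kernel ?M" using zK[OF hc] by simp
    moreover have "?R `` {gplus G0 H} \<in> P_classes \<A>"
      unfolding P_classes_def using p closedD2[OF c G0(1) H] by blast
    ultimately show False using contra by blast
  qed
  have "opts G0 = {||}"
  proof (rule ccontr)
    assume ne: "opts G0 \<noteq> {||}"
    have "\<forall>a. a |\<in>| opts (gplus G0 G0) \<longrightarrow> \<not> isP a"
    proof (intro allI impI)
      fix a assume "a |\<in>| opts (gplus G0 G0)"
      then obtain b where b: "b |\<in>| opts G0" "a = gplus b G0 \<or> a = gplus G0 b"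
        unfolding opts_gplus by auto
      then have "b \<in> \<A>" using closedD1[OF c G0(1)] by blast
      then show "\<not> isP a" using b notP gplus_comm by metis
    qed
    moreover have "opts (gplus G0 G0) \<noteq> {||}" using ne unfolding opts_gplus by auto
    ultimately have "isP (gplus G0 G0)" using isP_opts by blast
    then show False using notP G0(1) by blast
  qed
  then have "G0 = zero_game" by (metis game.collapse)
  obtain G where G: "G \<in> \<A>" "G \<noteq> zero_game" using assms(1,3) by blast
  have st: "Game {|zero_game|} \<in> \<A>" using star_in[OF c G] .
  have "isP (gplus G0 (Game {|zero_game|}))"
    using \<open>G0 = zero_game\<close> gplus_zero gplus_comm by simp
  then show False using notP st by blast
qed

end
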